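(* Let $q\neq0$ and let $\gamma\colon I\to\mathbb R^3$ be a curve parametrized by arc-length which is not a straight line and satisfies $\gamma''=q\,\gamma\times\gamma'$ (i.e. $\gamma$ is a conformal trajectory of the radial vector field $V(x,y,z)=x\partial_x+y\partial_y+z\partial_z$). Then the curvature of $\gamma$ is a nonzero constant $\kappa_0$, and there exists $a_0\in\mathbb R$ such that $\langle\gamma(s),\gamma'(s)\rangle=s+a_0$, the torsion is the affine function $\tau(s)=q(s+a_0)$, and $$\gamma(s)=(s+a_0)\gamma'(s)+\frac1q\,\gamma'(s)\times\gamma''(s)\quad\text{for all }s\in I.$$
   Context: $\times$ denotes the usual cross product of $\mathbb R^3$ and $\langle\cdot,\cdot\rangle$ the Euclidean inner product. Frenet frame of a non-straight unit-speed curve: $T=\gamma'$, $T'=\kappa N$ with $\kappa>0$, $B=T\times N$, $N'=-\kappa T+\tau B$, $B'=-\tau N$; $\kappa$ is the curvature and $\tau$ the torsion. *)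

theory Defs
  imports "HOL-Analysis.Analysis" "HOL-Analysis.Cross3"
begin

text \<open>Frenet apparatus of a unit-speed curve, given its first derivative g1 = gamma'
  (the unit tangent T) and second derivative g2 = gamma''.\<close>

definition curvature :: "(real \<Rightarrow> real^3) \<Rightarrow> real \<Rightarrow> real" where
  "curvature g2 s = norm (g2 s)"

definition frenet_N :: "(real \<Rightarrow> real^3) \<Rightarrow> real \<Rightarrow> real^3" where
  "frenet_N g2 s = (1 / norm (g2 s)) *\<^sub>R g2 s"

definition frenet_B :: "(real \<Rightarrow> real^3) \<Rightarrow> (real \<Rightarrow> real^3) \<Rightarrow> real \<Rightarrow> real^3" where
  "frenet_B g1 g2 s = cross3 (g1 s) (frenet_N g2 s)"

definition is_torsion_at :: "(real \<Rightarrow> real^3) \<Rightarrow> (real \<Rightarrow> real^3) \<Rightarrow> real \<Rightarrow> real \<Rightarrow> bool" where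
  "is_torsion_at g1 g2 s tau \<longleftrightarrow>
     (frenet_N g2 has_vector_derivative
        ((- curvature g2 s) *\<^sub>R g1 s + tau *\<^sub>R frenet_B g1 g2 s)) (at s)"

end

theory Submission
  imports Defs
begin

lemma bb_cross: "bounded_bilinear (cross3 :: real^3 \<Rightarrow> real^3 \<Rightarrow> real^3)"
  using bilinear_cross bilinear_conv_bounded_bilinear by blast

lemma triple: "cross3 (a::real^3) (cross3 b c) = (a \<bullet> c) *\<^sub>R b - (a \<bullet> b) *\<^sub>R c"
  by (simp add: cross3_simps forall_3)

lemma dotc1: "(a::real^3) \<bullet> cross3 a b = 0" by (simp add: cross3_simps)
lemma dotc2: "(a::real^3) \<bullet> cross3 b a = 0" by (simp add: cross3_simps)
lemma dotc3: "cross3 a (b::real^3) \<bullet> b = 0" by (simp add: cross3_simps)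
lemma dotc4: "cross3 b (a::real^3) \<bullet> b = 0" by (simp add: cross3_simps)
lemma crefl: "cross3 (a::real^3) a = 0" by (simp add: cross3_simps)

lemma vd_real: "((f::real\<Rightarrow>real) has_vector_derivative d) (at x) \<Longrightarrow> (f has_field_derivative d) (at x within S)"
  by (simp add: has_real_derivative_iff_has_vector_derivative has_vector_derivative_at_within)

lemma vd_scale: "(g has_vector_derivative g') F \<Longrightarrow> ((\<lambda>x. c *\<^sub>R g x) has_vector_derivative c *\<^sub>R g') F"
  by (rule bounded_linear.has_vector_derivative[OF bounded_linear_scaleR_right])

theorem theorem1:
  fixes q :: real and I :: "real set"
    and \<gamma> \<gamma>1 \<gamma>2 :: "real \<Rightarrow> real^3"
  assumes q: "q \<noteq> 0"
    and I: "open I" "is_interval I" "I \<noteq> {}"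
    and d1: "\<And>s. s \<in> I \<Longrightarrow> (\<gamma> has_vector_derivative \<gamma>1 s) (at s)"
    and d2: "\<And>s. s \<in> I \<Longrightarrow> (\<gamma>1 has_vector_derivative \<gamma>2 s) (at s)"
    and unit: "\<And>s. s \<in> I \<Longrightarrow> norm (\<gamma>1 s) = 1"
    and not_line: "\<exists>s\<in>I. \<gamma>2 s \<noteq> 0"
    and eq: "\<And>s. s \<in> I \<Longrightarrow> \<gamma>2 s = q *\<^sub>R cross3 (\<gamma> s) (\<gamma>1 s)"
  shows "\<exists>\<kappa>0. \<kappa>0 \<noteq> 0 \<and> (\<forall>s\<in>I. curvature \<gamma>2 s = \<kappa>0) \<and>
           (\<exists>a0. \<forall>s\<in>I. \<gamma> s \<bullet> \<gamma>1 s = s + a0 \<and>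
                         is_torsion_at \<gamma>1 \<gamma>2 s (q * (s + a0)) \<and>
                         \<gamma> s = (s + a0) *\<^sub>R \<gamma>1 s + (1 / q) *\<^sub>R cross3 (\<gamma>1 s) (\<gamma>2 s))"
proof -
  have cv: "convex I" using I(2) by (simp add: is_interval_convex)
  have d3: "(\<gamma>2 has_vector_derivative q *\<^sub>R cross3 (\<gamma> s) (\<gamma>2 s)) (at s)" if s: "s \<in> I" for s
  proof -
    have "((\<lambda>x. cross3 (\<gamma> x) (\<gamma>1 x)) has_vector_derivative
            (cross3 (\<gamma> s) (\<gamma>2 s) + cross3 (\<gamma>1 s) (\<gamma>1 s))) (at s)"
      using bounded_bilinear.has_vector_derivative[OF bb_cross d1[OF s] d2[OF s]] .
    then have "((\<lambda>x. q *\<^sub>R cross3 (\<gamma> x) (\<gamma>1 x)) has_vector_derivative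
            q *\<^sub>R cross3 (\<gamma> s) (\<gamma>2 s)) (at s)"
      using vd_scale crefl by fastforce
    then show ?thesis
      by (rule has_vector_derivative_transform_within_open[OF _ I(1) s]) (simp add: eq)
  qed
  have orth: "\<gamma>1 s \<bullet> \<gamma>2 s = 0" if "s \<in> I" for s
    using eq[OF that] by (simp add: dotc2)
  have "\<exists>c. \<forall>s\<in>I. \<gamma>2 s \<bullet> \<gamma>2 s = c"
  proof (rule has_field_derivative_zero_constant[OF cv])
    fix s assume s: "s \<in> I"
    have "((\<lambda>x. \<gamma>2 x \<bullet> \<gamma>2 x) has_vector_derivative
        (\<gamma>2 s \<bullet> (q *\<^sub>R cross3 (\<gamma> s) (\<gamma>2 s)) + (q *\<^sub>R cross3 (\<gamma> s) (\<gamma>2 s)) \<bullet> \<gamma>2 s)) (at s)"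
      using bounded_bilinear.has_vector_derivative[OF bounded_bilinear_inner d3[OF s] d3[OF s]] .
    then show "((\<lambda>x. \<gamma>2 x \<bullet> \<gamma>2 x) has_field_derivative 0) (at s within I)"
      by (intro vd_real) (simp add: dotc1 dotc2 dotc3 dotc4)
  qed
  then obtain c where c: "\<And>s. s \<in> I \<Longrightarrow> \<gamma>2 s \<bullet> \<gamma>2 s = c" by blast
  define k where "k = sqrt c"
  have curv: "curvature \<gamma>2 s = k" if "s \<in> I" for s
    using c[OF that] by (simp add: curvature_def k_def norm_eq_sqrt_inner)
  obtain s0 where s0: "s0 \<in> I" "\<gamma>2 s0 \<noteq> 0" using not_line by blast
  have k0: "k \<noteq> 0" using curv[OF s0(1)] s0(2) by (metis curvature_def norm_eq_zero)
  have "\<exists>c. \<forall>s\<in>I. \<gamma> s \<bullet> \<gamma>1 s - s = c"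
  proof (rule has_field_derivative_zero_constant[OF cv])
    fix s assume s: "s \<in> I"
    have "((\<lambda>x. \<gamma> x \<bullet> \<gamma>1 x) has_vector_derivative
        (\<gamma> s \<bullet> \<gamma>2 s + \<gamma>1 s \<bullet> \<gamma>1 s)) (at s)"
      using bounded_bilinear.has_vector_derivative[OF bounded_bilinear_inner d1[OF s] d2[OF s]] .
    moreover have "\<gamma> s \<bullet> \<gamma>2 s + \<gamma>1 s \<bullet> \<gamma>1 s = 1"
      using eq[OF s] unit[OF s] by (simp add: dotc1 inner_commute norm_eq_1)
    ultimately have "((\<lambda>x. \<gamma> x \<bullet> \<gamma>1 x) has_vector_derivative 1) (at s)" by simp
    then have "((\<lambda>x. \<gamma> x \<bullet> \<gamma>1 x - x) has_vector_derivative 1 - 1) (at s)"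
      by (intro derivative_intros) auto
    then show "((\<lambda>x. \<gamma> x \<bullet> \<gamma>1 x - x) has_field_derivative 0) (at s within I)"
      by (intro vd_real) simp
  qed
  then obtain a0 where a0': "\<And>s. s \<in> I \<Longrightarrow> \<gamma> s \<bullet> \<gamma>1 s - s = a0" by blast
  have a0: "\<gamma> s \<bullet> \<gamma>1 s = s + a0" if "s \<in> I" for s using a0'[OF that] by linarith
  have pos: "\<gamma> s = (s + a0) *\<^sub>R \<gamma>1 s + (1 / q) *\<^sub>R cross3 (\<gamma>1 s) (\<gamma>2 s)" if s: "s \<in> I" for s
  proof -
    have "cross3 (\<gamma>1 s) (\<gamma>2 s) = q *\<^sub>R (\<gamma> s - (s + a0) *\<^sub>R \<gamma>1 s)"
      using eq[OF s] a0[OF s] unit[OF s]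
      by (simp add: cross_mult_right triple norm_eq_1 inner_commute algebra_simps)
    then show ?thesis using q by simp
  qed
  show ?thesis
  proof (intro exI conjI ballI)
    show "k \<noteq> 0" by fact
    fix s assume s: "s \<in> I"
    show "curvature \<gamma>2 s = k" using curv s .
    show "\<gamma> s \<bullet> \<gamma>1 s = s + a0" using a0 s .
    show "\<gamma> s = (s + a0) *\<^sub>R \<gamma>1 s + (1 / q) *\<^sub>R cross3 (\<gamma>1 s) (\<gamma>2 s)" using pos s .
    have nk: "norm (\<gamma>2 x) = k" if "x \<in> I" for x using curv[OF that] by (simp add: curvature_def)
    have dN: "(frenet_N \<gamma>2 has_vector_derivative (1/k) *\<^sub>R (q *\<^sub>R cross3 (\<gamma> s) (\<gamma>2 s))) (at s)"
      by (rule has_vector_derivative_transform_within_open[OF vd_scale[OF d3[OF s]] I(1) s])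
         (simp add: frenet_N_def nk)
    have "(1/k) *\<^sub>R (q *\<^sub>R cross3 (\<gamma> s) (\<gamma>2 s)) =
       (- curvature \<gamma>2 s) *\<^sub>R \<gamma>1 s + (q * (s + a0)) *\<^sub>R frenet_B \<gamma>1 \<gamma>2 s"
    proof -
      have "cross3 (cross3 (\<gamma>1 s) (\<gamma>2 s)) (\<gamma>2 s) = - (k*k) *\<^sub>R \<gamma>1 s"
        using orth[OF s] nk[OF s] cross_skew[of "cross3 (\<gamma>1 s) (\<gamma>2 s)" "\<gamma>2 s"]
        by (simp add: triple power2_norm_eq_inner[symmetric] power2_eq_square inner_commute)
      then have cg: "cross3 (\<gamma> s) (\<gamma>2 s) = (s + a0) *\<^sub>R cross3 (\<gamma>1 s) (\<gamma>2 s) - ((k*k)/q) *\<^sub>R \<gamma>1 s"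
        by (subst pos[OF s]) (simp add: cross_add_left cross_mult_left)
      have "(1/k) *\<^sub>R (q *\<^sub>R cross3 (\<gamma> s) (\<gamma>2 s)) =
          (q * (s + a0) / k) *\<^sub>R cross3 (\<gamma>1 s) (\<gamma>2 s) - k *\<^sub>R \<gamma>1 s"
      proof -
        have e1: "(q / k) * (s + a0) = q * (s + a0) / k" by simp
        have e2: "(q / k) * (k * k / q) = k" using q k0 by (simp add: field_simps)
        have "(1/k) *\<^sub>R (q *\<^sub>R cross3 (\<gamma> s) (\<gamma>2 s)) = (q / k) *\<^sub>R cross3 (\<gamma> s) (\<gamma>2 s)"
          by simp
        also have "\<dots> = ((q / k) * (s + a0)) *\<^sub>R cross3 (\<gamma>1 s) (\<gamma>2 s) - ((q / k) * (k * k / q)) *\<^sub>R \<gamma>1 s"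
          unfolding cg by (simp only: scaleR_diff_right scaleR_scaleR)
        finally show ?thesis unfolding e1 e2 .
      qed
      then show ?thesis
        using curv[OF s] by (simp add: frenet_B_def frenet_N_def nk[OF s] cross_mult_right)

    qed
    then show "is_torsion_at \<gamma>1 \<gamma>2 s (q * (s + a0))"
      using dN by (simp add: is_torsion_at_def)
  qed
qed

end
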